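(* Let $\beta\in\mathbb{C}$ with $|\beta|=1$ and $\beta^n\neq1$ for all $n\in\mathbb{N}$. Let $m\in\mathrm{Hol}(\mathbb{D})$, $m\not\equiv0$, and $T:\mathrm{Hol}(\mathbb{D})\to\mathrm{Hol}(\mathbb{D})$ given by $(Tf)(z)=m(z)f(\beta z)$. If there exists $z_0\in\mathbb{D}$ with $m(z_0)=0$, then $\sigma_p(T)=\emptyset$.
   Context: $\mathbb{D}$ is the open unit disc, $\mathrm{Hol}(\mathbb{D})$ the space of holomorphic functions on $\mathbb{D}$. $\sigma_p(T)$ is the set of $\lambda\in\mathbb{C}$ such that $\lambda\mathrm{Id}-T$ is not injective. *)

theory Defs
  imports "HOL-Analysis.Analysis"
begin

abbreviation disc :: "complex set" where
  "disc \<equiv> ball 0 1"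

text \<open>Hol(D): holomorphic functions on the disc. Functions are represented by
total functions normalised to 0 outside the disc, so that equality of elements
of Hol(D) is equality of functions on the disc.\<close>
definition Hol :: "(complex \<Rightarrow> complex) set" where
  "Hol = {f. f holomorphic_on disc \<and> (\<forall>z. z \<notin> disc \<longrightarrow> f z = 0)}"

definition wcomp_op :: "(complex \<Rightarrow> complex) \<Rightarrow> complex \<Rightarrow> (complex \<Rightarrow> complex) \<Rightarrow> (complex \<Rightarrow> complex)" where
  "wcomp_op m \<beta> f = (\<lambda>z. if z \<in> disc then m z * f (\<beta> * z) else 0)"

definition point_spectrum :: "((complex \<Rightarrow> complex) \<Rightarrow> (complex \<Rightarrow> complex)) \<Rightarrow> complex set" where
  "point_spectrum T = {c. \<not> inj_on (\<lambda>f. (\<lambda>z. c * f z - T f z)) Hol}"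

end

theory Submission imports Defs "HOL-Complex_Analysis.Complex_Analysis" begin

lemma disc_mult:
  fixes \<beta> :: complex
  assumes "norm \<beta> = 1" "z \<in> disc" shows "\<beta> * z \<in> disc"
  using assms by (simp add: norm_mult)

lemma caseA:
  fixes \<beta> :: complex
  assumes nb: "norm \<beta> = 1" and hm: "m holomorphic_on disc"
    and z1: "z1 \<in> disc" "m z1 \<noteq> 0" and hf: "f holomorphic_on disc"
    and eq: "\<And>z. z \<in> disc \<Longrightarrow> m z * f (\<beta> * z) = 0"
    and w: "w \<in> disc"
  shows "f w = 0"
proof -
  have "isCont m z1"
    using hm z1 by (meson holomorphic_on_imp_continuous_on continuous_on_eq_continuous_at open_ball)
  then obtain e where e: "e > 0" "\<And>y. dist z1 y < e \<Longrightarrow> m y \<noteq> 0"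
    using continuous_at_avoid[of z1 m 0] z1 by (auto simp: continuous_at)
  define e' where "e' = min e (1 - norm z1)"
  have e'pos: "e' > 0" using e z1 by (simp add: e'_def)
  have b0: "\<beta> \<noteq> 0" using nb by auto
  have U: "ball (\<beta> * z1) e' \<subseteq> disc"
  proof
    fix y assume "y \<in> ball (\<beta> * z1) e'"
    hence "norm (y - \<beta> * z1) < 1 - norm z1" by (simp add: dist_norm e'_def norm_minus_commute)
    moreover have "norm y \<le> norm (y - \<beta> * z1) + norm (\<beta> * z1)" by (metis norm_triangle_sub add.commute)
    ultimately show "y \<in> disc" using nb by (simp add: norm_mult)
  qed
  have fU: "f y = 0" if y: "y \<in> ball (\<beta> * z1) e'" for y
  proof -
    have "norm (y / \<beta> - z1) = norm (y - \<beta> * z1)"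
    proof -
      have "y / \<beta> - z1 = (y - \<beta> * z1) / \<beta>" using b0 by (simp add: field_simps)
      thus ?thesis using nb by (simp add: norm_divide)
    qed
    hence d: "dist z1 (y / \<beta>) < e'" using y by (simp add: dist_norm norm_minus_commute)
    hence "y / \<beta> \<in> disc"
    proof -
      have "norm (y / \<beta>) \<le> norm (y / \<beta> - z1) + norm z1" by (metis norm_triangle_sub add.commute)
      thus ?thesis using d by (simp add: dist_norm e'_def norm_minus_commute)
    qed
    moreover have "m (y / \<beta>) \<noteq> 0" using e(2) d by (simp add: e'_def)
    ultimately show ?thesis using eq[of "y / \<beta>"] b0 by simp
  qed
  show ?thesis
    apply (rule analytic_continuation[OF hf _ _ U, of "\<beta> * z1"])
    using U e'pos fU w nb z1 by (auto simp: islimpt_ball norm_mult)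
qed

lemma caseB:
  fixes \<beta> :: complex
  assumes nb: "norm \<beta> = 1" and nroot: "\<forall>n::nat. n \<ge> 1 \<longrightarrow> \<beta> ^ n \<noteq> 1"
    and z0: "z0 \<in> disc" "m z0 = 0" "z0 \<noteq> 0" and hf: "f holomorphic_on disc"
    and c: "c \<noteq> 0"
    and eq: "\<And>z. z \<in> disc \<Longrightarrow> c * f z = m z * f (\<beta> * z)"
    and w: "w \<in> disc"
  shows "f w = 0"
proof -
  have b0: "\<beta> \<noteq> 0" using nb by auto
  define u where "u k = z0 / \<beta> ^ k" for k :: nat
  have nu: "norm (u k) = norm z0" for k using nb by (simp add: u_def norm_divide norm_power)
  hence ud: "u k \<in> disc" for k using z0 by simp
  have fu: "f (u k) = 0" for k
  proof (induction k)
    case 0 then show ?case using eq[of z0] z0 c by (simp add: u_def)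
  next
    case (Suc k)
    have "\<beta> * u (Suc k) = u k" using b0 by (simp add: u_def field_simps)
    then show ?case using eq[of "u (Suc k)"] ud Suc c by simp
  qed
  have inj: "inj u"
  proof (rule injI)
    fix i j assume "u i = u j"
    hence ij: "\<beta> ^ i = \<beta> ^ j" using z0 b0 by (simp add: u_def field_simps)
    show "i = j"
    proof (rule ccontr)
      assume "i \<noteq> j"
      then consider "i < j" | "j < i" by linarith
      thus False
      proof cases
        case 1
        have "\<beta> ^ j = \<beta> ^ i * \<beta> ^ (j - i)" using 1 by (simp add: power_add[symmetric])
        hence "\<beta> ^ (j - i) = 1" using ij b0 by simp
        thus False using nroot 1 by auto
      next
        case 2
        have "\<beta> ^ i = \<beta> ^ j * \<beta> ^ (i - j)" using 2 by (simp add: power_add[symmetric])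
        hence "\<beta> ^ (i - j) = 1" using ij b0 by simp
        thus False using nroot 2 by auto
      qed
    qed
  qed
  have "infinite (range u)" using inj range_inj_infinite by blast
  moreover have "range u \<subseteq> sphere 0 (norm z0)" using nu by auto
  ultimately obtain \<xi> where xi: "\<xi> \<in> sphere 0 (norm z0)" "\<xi> islimpt range u"
    using Heine_Borel_imp_Bolzano_Weierstrass[OF compact_sphere] by blast
  have "\<xi> \<in> disc" using xi z0 by simp
  show ?thesis
    by (rule analytic_continuation[OF hf _ _ _ \<open>\<xi> \<in> disc\<close> xi(2)]) (use ud fu w in auto)
qed

lemma caseC:
  fixes \<beta> :: complex
  assumes nb: "norm \<beta> = 1" and hm: "m holomorphic_on disc"
    and z1: "z1 \<in> disc" "m z1 \<noteq> 0" and m0: "m 0 = 0" and hf: "f holomorphic_on disc"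
    and c: "c \<noteq> 0"
    and eq: "\<And>z. z \<in> disc \<Longrightarrow> c * f z = m z * f (\<beta> * z)"
    and w: "w \<in> disc"
  shows "f w = 0"
proof (rule ccontr)
  assume fw: "f w \<noteq> 0"
  have f0: "f 0 = 0" using eq[of 0] m0 c by simp
  have ncf: "\<not> f constant_on disc"
    using fw f0 w unfolding constant_on_def by (metis centre_in_ball zero_less_one)
  have ncm: "\<not> m constant_on disc"
    using z1 m0 unfolding constant_on_def by (metis centre_in_ball zero_less_one)
  obtain g r n where g: "0 < n" "0 < r" "ball 0 r \<subseteq> disc" "g holomorphic_on ball 0 r"
      "\<And>w. w \<in> ball 0 r \<Longrightarrow> f w = (w - 0)^n * g w" "\<And>w. w \<in> ball 0 r \<Longrightarrow> g w \<noteq> 0"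
    using holomorphic_factor_zero_nonconstant[OF hf open_ball connected_ball _ f0 ncf] by (metis centre_in_ball zero_less_one diff_zero)
  obtain h r' j where h: "0 < j" "0 < r'" "ball 0 r' \<subseteq> disc" "h holomorphic_on ball 0 r'"
      "\<And>w. w \<in> ball 0 r' \<Longrightarrow> m w = (w - 0)^j * h w"
    using holomorphic_factor_zero_nonconstant[OF hm open_ball connected_ball _ m0 ncm] by (metis centre_in_ball zero_less_one diff_zero)
  define \<rho> where "\<rho> = min r r'"
  have rp: "\<rho> > 0" using g h by (simp add: \<rho>_def)
  define \<phi> where "\<phi> w = c * g w - w ^ j * h w * \<beta> ^ n * g (\<beta> * w)" for w
  have cont: "continuous_on (ball 0 \<rho>) \<phi>"
  proof -
    have "continuous_on (ball 0 \<rho>) g"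
      using g(4) holomorphic_on_imp_continuous_on continuous_on_subset by (metis \<rho>_def ball_min_Int inf_le1)
    moreover have "continuous_on (ball 0 \<rho>) h"
      using h(4) holomorphic_on_imp_continuous_on continuous_on_subset by (metis \<rho>_def ball_min_Int inf_le2)
    moreover have "continuous_on (ball 0 \<rho>) (\<lambda>w. g (\<beta> * w))"
    proof -
      have "continuous_on (ball 0 \<rho>) (\<lambda>w. \<beta> * w)" by (intro continuous_intros)
      moreover have "(\<lambda>w. \<beta> * w) ` ball 0 \<rho> \<subseteq> ball 0 r" using nb by (auto simp: norm_mult \<rho>_def)
      ultimately show ?thesis
        using continuous_on_compose2[of "ball 0 r" g] g(4) holomorphic_on_imp_continuous_on by blast
    qed
    ultimately show ?thesis unfolding \<phi>_def by (intro continuous_intros) auto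
  qed
  have zero: "\<phi> w = 0" if "w \<in> ball 0 \<rho>" "w \<noteq> 0" for w
  proof -
    have wd: "w \<in> disc" "w \<in> ball 0 r" "w \<in> ball 0 r'" "\<beta> * w \<in> ball 0 r"
      using that g(3) nb by (auto simp: \<rho>_def norm_mult)
    have "c * (w ^ n * g w) = w ^ j * h w * ((\<beta> * w) ^ n * g (\<beta> * w))"
      using eq[OF wd(1)] g(5)[OF wd(2)] h(5)[OF wd(3)] g(5)[OF wd(4)] by simp
    hence "w ^ n * (c * g w) = w ^ n * (w ^ j * h w * \<beta> ^ n * g (\<beta> * w))"
      by (simp add: power_mult_distrib algebra_simps)
    thus ?thesis using that(2) by (simp add: \<phi>_def)
  qed
  have "isCont \<phi> 0" using cont rp by (simp add: continuous_on_eq_continuous_at)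
  hence l1: "(\<phi> \<longlongrightarrow> \<phi> 0) (at 0)" by (simp add: isCont_def)
  have "eventually (\<lambda>w. w \<in> ball 0 \<rho>) (at (0::complex))"
    using rp by (intro eventually_at_in_open') auto
  hence "eventually (\<lambda>w. \<phi> w = 0) (at (0::complex))"
    using eventually_at_filter by (smt (verit, best) eventually_elim2 zero)
  hence l2: "(\<phi> \<longlongrightarrow> 0) (at 0)" by (simp add: tendsto_eventually)
  have "\<phi> 0 = 0" using tendsto_unique[OF _ l1 l2] by simp
  moreover have "\<phi> 0 = c * g 0" using g(1) h(1) by (simp add: \<phi>_def)
  moreover have "g 0 \<noteq> 0" using g by simp
  ultimately show False using c by simp
qed

lemma core:
  fixes \<beta> :: complex
  assumes nb: "norm \<beta> = 1" and nroot: "\<forall>n::nat. n \<ge> 1 \<longrightarrow> \<beta> ^ n \<noteq> 1"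
    and hm: "m holomorphic_on disc"
    and z1: "z1 \<in> disc" "m z1 \<noteq> 0" and z0: "z0 \<in> disc" "m z0 = 0"
    and hf: "f holomorphic_on disc"
    and eq: "\<And>z. z \<in> disc \<Longrightarrow> c * f z = m z * f (\<beta> * z)"
    and w: "w \<in> disc"
  shows "f w = 0"
proof (cases "c = 0")
  case True
  show ?thesis by (rule caseA[OF nb hm z1 hf _ w]) (use eq True in auto)
next
  case False
  show ?thesis
  proof (cases "z0 = 0")
    case True
    show ?thesis by (rule caseC[OF nb hm z1 _ hf False eq w]) (use z0 True in auto)
  next
    case nz: False
    show ?thesis by (rule caseB[OF nb nroot z0 nz hf False eq w])
  qed
qed

theorem proposition3p6:
  fixes \<beta> :: complex and m :: "complex \<Rightarrow> complex"
  assumes "norm \<beta> = 1"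
    and "\<forall>n::nat. n \<ge> 1 \<longrightarrow> \<beta> ^ n \<noteq> 1"
    and "m holomorphic_on disc"
    and "\<exists>z\<in>disc. m z \<noteq> 0"
    and "\<exists>z0\<in>disc. m z0 = 0"
  shows "point_spectrum (wcomp_op m \<beta>) = {}"
proof -
  obtain z1 where z1: "z1 \<in> disc" "m z1 \<noteq> 0" using assms(4) by blast
  obtain z0 where z0: "z0 \<in> disc" "m z0 = 0" using assms(5) by blast
  have "inj_on (\<lambda>f. (\<lambda>z. c * f z - wcomp_op m \<beta> f z)) Hol" for c
  proof (rule inj_onI)
    fix f1 f2 assume f1: "f1 \<in> Hol" and f2: "f2 \<in> Hol"
      and e: "(\<lambda>z. c * f1 z - wcomp_op m \<beta> f1 z) = (\<lambda>z. c * f2 z - wcomp_op m \<beta> f2 z)"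
    define f where "f z = f1 z - f2 z" for z
    have hf: "f holomorphic_on disc" using f1 f2 unfolding f_def Hol_def
      by (auto intro: holomorphic_intros)
    have eq: "c * f z = m z * f (\<beta> * z)" if "z \<in> disc" for z
    proof -
      have "c * f1 z - m z * f1 (\<beta> * z) = c * f2 z - m z * f2 (\<beta> * z)"
        using fun_cong[OF e, of z] that by (simp add: wcomp_op_def)
      thus ?thesis by (simp add: f_def algebra_simps)
    qed
    show "f1 = f2"
    proof
      fix z show "f1 z = f2 z"
      proof (cases "z \<in> disc")
        case True
        then show ?thesis using core[OF assms(1,2,3) z1 z0 hf eq True] by (simp add: f_def)
      next
        case False
        then show ?thesis using f1 f2 by (simp add: Hol_def)
      qed
    qed
  qed
  thus ?thesis by (simp add: point_spectrum_def)
qed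

end
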